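(* Let $k\ge 1$ be an integer and let $GP(3k,k)$ be the generalised Petersen graph. If $k$ is odd, the number of $1$-factorisations of $GP(3k,k)$ equals the Jacobsthal number $J(k)$; if $k$ is even, the number of $1$-factorisations of $GP(3k,k)$ equals $4J(k)$.
   Context: For integers $n,k$ with $1\le k<n/2$, the generalised Petersen graph $GP(n,k)$ has vertex set $\{u_i,v_i : i\in\mathbb{Z}_n\}$ and edge set $\{u_iu_{i+1},\ u_iv_i,\ v_iv_{i+k} : i\in\mathbb{Z}_n\}$ (indices modulo $n$). A $1$-factorisation of a graph is a partition of its edge set into perfect matchings (unordered). The Jacobsthal numbers are defined by $J(0)=0$, $J(1)=1$ and $J(k)=J(k-1)+2J(k-2)$ for $k\ge 2$. *)

theory Defs
  imports Main "HOL-Library.Disjoint_Sets"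
begin

text \<open>Vertices of GP(n,k): (False,i) is u_i, (True,i) is v_i, for i < n.
  Edges are represented as two-element sets of vertices.\<close>

definition GP_verts :: "nat \<Rightarrow> (bool \<times> nat) set" where
  "GP_verts n = UNIV \<times> {..<n}"

definition GP_edges :: "nat \<Rightarrow> nat \<Rightarrow> (bool \<times> nat) set set" where
  "GP_edges n k =
     {{(False, i), (False, (i + 1) mod n)} | i. i < n}
   \<union> {{(False, i), (True, i)} | i. i < n}
   \<union> {{(True, i), (True, (i + k) mod n)} | i. i < n}"

definition perfect_matching :: "'a set \<Rightarrow> 'a set set \<Rightarrow> 'a set set \<Rightarrow> bool" where
  "perfect_matching V E M \<longleftrightarrow> M \<subseteq> E \<and> (\<forall>x\<in>V. \<exists>!e. e \<in> M \<and> x \<in> e)"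

definition one_factorisation :: "'a set \<Rightarrow> 'a set set \<Rightarrow> 'a set set set \<Rightarrow> bool" where
  "one_factorisation V E F \<longleftrightarrow> partition_on E F \<and> (\<forall>M\<in>F. perfect_matching V E M)"

fun jacobsthal :: "nat \<Rightarrow> nat" where
  "jacobsthal 0 = 0"
| "jacobsthal (Suc 0) = 1"
| "jacobsthal (Suc (Suc k)) = jacobsthal (Suc k) + 2 * jacobsthal k"

end

theory Submission
  imports Defs "HOL-Library.FuncSet"
begin


type_synonym st = "nat \<times> nat \<times> nat"

definition oth :: "nat \<Rightarrow> nat \<Rightarrow> nat" where "oth a b = 3 - a - b"

fun Ok :: "st \<Rightarrow> st \<Rightarrow> bool" where
  "Ok (a1,a2,a3) (b1,b2,b3) = (a1 \<noteq> b1 \<and> a2 \<noteq> b2 \<and> a3 \<noteq> b3 \<and>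
      distinct [oth a1 b1, oth a2 b2, oth a3 b3])"

fun rot :: "st \<Rightarrow> st" where "rot (x,y,z) = (z,x,y)"

definition allst :: "st list" where
  "allst = [(x,y,z). x \<leftarrow> [0,1,2], y \<leftarrow> [0,1,2], z \<leftarrow> [0,1,2]]"

definition nexts :: "st \<Rightarrow> st list" where "nexts a = filter (Ok a) allst"

fun walk :: "nat \<Rightarrow> st \<Rightarrow> st list" where
  "walk 0 a = [a]"
| "walk (Suc j) a = concat (map (walk j) (nexts a))"

lemma allst_eq: "allst = [(0,0,0),(0,0,1),(0,0,2),(0,1,0),(0,1,1),(0,1,2),(0,2,0),(0,2,1),(0,2,2),
 (1,0,0),(1,0,1),(1,0,2),(1,1,0),(1,1,1),(1,1,2),(1,2,0),(1,2,1),(1,2,2),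
 (2,0,0),(2,0,1),(2,0,2),(2,1,0),(2,1,1),(2,1,2),(2,2,0),(2,2,1),(2,2,2)]"
  by (simp add: allst_def)

lemma nexts_simps[simp]:
  "nexts (0,0,0) = []"
    "nexts (0,0,Suc 0) = [(Suc 0,2,2),(2,Suc 0,2)]"
    "nexts (0,0,2) = [(Suc 0,2,Suc 0),(2,Suc 0,Suc 0)]"
    "nexts (0,Suc 0,0) = [(Suc 0,2,2),(2,2,Suc 0)]"
    "nexts (0,Suc 0,Suc 0) = [(2,0,2),(2,2,0)]"
    "nexts (0,Suc 0,2) = [(Suc 0,2,0),(2,0,Suc 0)]"
    "nexts (0,2,0) = [(Suc 0,Suc 0,2),(2,Suc 0,Suc 0)]"
    "nexts (0,2,Suc 0) = [(Suc 0,0,2),(2,Suc 0,0)]"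
    "nexts (0,2,2) = [(Suc 0,0,Suc 0),(Suc 0,Suc 0,0)]"
    "nexts (Suc 0,0,0) = [(2,Suc 0,2),(2,2,Suc 0)]"
    "nexts (Suc 0,0,Suc 0) = [(0,2,2),(2,2,0)]"
    "nexts (Suc 0,0,2) = [(0,2,Suc 0),(2,Suc 0,0)]"
    "nexts (Suc 0,Suc 0,0) = [(0,2,2),(2,0,2)]"
    "nexts (Suc 0,Suc 0,Suc 0) = []"
    "nexts (Suc 0,Suc 0,2) = [(0,2,0),(2,0,0)]"
    "nexts (Suc 0,2,0) = [(0,Suc 0,2),(2,0,Suc 0)]"
    "nexts (Suc 0,2,Suc 0) = [(0,0,2),(2,0,0)]"
    "nexts (Suc 0,2,2) = [(0,0,Suc 0),(0,Suc 0,0)]"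
    "nexts (2,0,0) = [(Suc 0,Suc 0,2),(Suc 0,2,Suc 0)]"
    "nexts (2,0,Suc 0) = [(0,Suc 0,2),(Suc 0,2,0)]"
    "nexts (2,0,2) = [(0,Suc 0,Suc 0),(Suc 0,Suc 0,0)]"
    "nexts (2,Suc 0,0) = [(0,2,Suc 0),(Suc 0,0,2)]"
    "nexts (2,Suc 0,Suc 0) = [(0,0,2),(0,2,0)]"
    "nexts (2,Suc 0,2) = [(0,0,Suc 0),(Suc 0,0,0)]"
    "nexts (2,2,0) = [(0,Suc 0,Suc 0),(Suc 0,0,Suc 0)]"
    "nexts (2,2,Suc 0) = [(0,Suc 0,0),(Suc 0,0,0)]"
    "nexts (2,2,2) = []"
  by (simp_all add: nexts_def allst_eq oth_def)


lemma concat_map_concat: "concat (map (\<lambda>x. concat (map g (h x))) xs) = concat (map g (concat (map h xs)))"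
  by (induction xs) auto

lemma walk_add: "walk (m + j) a = concat (map (walk j) (walk m a))"
proof (induction m arbitrary: a)
  case 0 then show ?case by simp
next
  case (Suc m)
  have "walk (Suc m + j) a = concat (map (walk (m+j)) (nexts a))" by simp
  also have "\<dots> = concat (map (\<lambda>x. concat (map (walk j) (walk m x))) (nexts a))"
  proof -
    have "walk (m+j) = (\<lambda>x. concat (map (walk j) (walk m x)))" by (rule ext) (rule Suc.IH)
    then show ?thesis by simp
  qed
  also have "\<dots> = concat (map (walk j) (walk (Suc m) a))"
    by (simp add: concat_map_concat)
  finally show ?case .
qed

lemma sum_concat_map: "sum_list (map g (concat (map h xs))) = sum_list (map (\<lambda>x. sum_list (map g (h x))) xs)"
  by (induction xs) simp_all

lemma key_id: "a \<in> set allst \<Longrightarrow>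
  sum_list (map (h::st\<Rightarrow>int) (walk (Suc(Suc(Suc(Suc(Suc 0))))) a)) + 4 * sum_list (map h (walk (Suc 0) a))
   = 5 * sum_list (map h (walk (Suc(Suc(Suc 0))) a))"
  by (auto simp add: allst_eq)

definition Q :: "st \<Rightarrow> st \<Rightarrow> bool" where
  "Q a b = (Ok (rot b) a \<and> snd (snd b) = 1)"

definition a0list :: "st list" where "a0list = filter (\<lambda>a. fst a = 0) allst"

definition cnt :: "nat \<Rightarrow> int" where
  "cnt j = sum_list (map (\<lambda>a. sum_list (map (\<lambda>b. if Q a b then 1 else 0) (walk j a))) a0list)"

lemma walk_sum_rec: "a \<in> set allst \<Longrightarrow>
  sum_list (map (g::st\<Rightarrow>int) (walk (j+5) a)) + 4 * sum_list (map g (walk (j+1) a))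
   = 5 * sum_list (map g (walk (j+3) a))"
proof -
  assume a: "a \<in> set allst"
  have e: "\<And>m. sum_list (map g (walk (j+m) a)) = sum_list (map (\<lambda>x. sum_list (map g (walk j x))) (walk m a))"
    by (simp only: add.commute[of j] walk_add sum_concat_map)
  show ?thesis unfolding e using key_id[OF a] by (simp add: eval_nat_numeral del: walk.simps)
qed

lemma walk_sum_rec_list: "\<forall>a\<in>set xs. a \<in> set allst \<Longrightarrow>
  sum_list (map (\<lambda>a. sum_list (map (G a :: st \<Rightarrow> int) (walk (j+5) a))) xs)
   + 4 * sum_list (map (\<lambda>a. sum_list (map (G a) (walk (j+1) a))) xs)
   = 5 * sum_list (map (\<lambda>a. sum_list (map (G a) (walk (j+3) a))) xs)"
proof (induction xs)
  case Nil then show ?case by simp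
next
  case (Cons a xs)
  then show ?case using walk_sum_rec[of a "G a" j] by (simp add: algebra_simps del: walk.simps)
qed

lemma cnt_rec: "cnt (j+5) + 4 * cnt (j+1) = 5 * cnt (j+3)"
  unfolding cnt_def by (rule walk_sum_rec_list) (simp add: a0list_def)

lemma cnt_base: "cnt 0 = 1" "cnt (Suc 0) = 4" "cnt (Suc (Suc 0)) = 3" "cnt (Suc (Suc (Suc 0))) = 20"
  "cnt (Suc (Suc (Suc (Suc 0)))) = 11"
  by (simp_all add: cnt_def a0list_def allst_eq Q_def oth_def)
lemma cnt_base': "cnt 2 = 3" "cnt 3 = 20" "cnt 4 = 11"
proof -
  have e2: "(2::nat) = Suc (Suc 0)" and e3: "(3::nat) = Suc (Suc (Suc 0))" and e4: "(4::nat) = Suc(Suc(Suc(Suc 0)))"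
    by simp_all
  show "cnt 2 = 3" by (subst e2) (rule cnt_base(3))
  show "cnt 3 = 20" by (subst e3) (rule cnt_base(4))
  show "cnt 4 = 11" by (subst e4) (rule cnt_base(5))
qed

lemma jac_rec: "jacobsthal (i+4) + 4 * jacobsthal i = 5 * jacobsthal (i+2)"
proof -
  have "jacobsthal (i+4) = jacobsthal (i+3) + 2 * jacobsthal (i+2)"
    by (simp add: numeral_eq_Suc)
  moreover have "jacobsthal (i+3) = jacobsthal (i+2) + 2 * jacobsthal (i+1)"
    by (simp add: numeral_eq_Suc)
  moreover have "jacobsthal (i+2) = jacobsthal (i+1) + 2 * jacobsthal i"
    by (simp add: numeral_eq_Suc)
  ultimately show ?thesis by linarith
qed

definition gval :: "nat \<Rightarrow> nat" where
  "gval k = (if odd k then jacobsthal k else 4 * jacobsthal k)"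

lemma gval_rec: "gval (i+4) + 4 * gval i = 5 * gval (i+2)"
  using jac_rec[of i] by (simp add: gval_def)

lemma gval_vals: "gval 1 = 1" "gval 2 = 4" "gval 3 = 3" "gval 4 = 20" "gval 5 = 11"
proof -
  have j: "jacobsthal 1 = 1" "jacobsthal 2 = 1" "jacobsthal 3 = 3" "jacobsthal 4 = 5" "jacobsthal 5 = 11"
    by (simp_all add: eval_nat_numeral)
  show "gval 1 = 1" "gval 2 = 4" "gval 3 = 3" "gval 4 = 20" "gval 5 = 11"
    by (simp_all add: gval_def j)
qed

lemma cnt_gval: "cnt j = int (gval (Suc j))"
proof (induction j rule: less_induct)
  case (less j)
  show ?case
  proof (cases "j < 5")
    case True
    then have "j = 0 \<or> j = 1 \<or> j = 2 \<or> j = 3 \<or> j = 4" by arith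
    then show ?thesis
      by (elim disjE) (simp_all add: cnt_base(1,2) cnt_base' gval_vals gval_vals[simplified] gval_vals(2)[unfolded numeral_2_eq_2])
  next
    case False
    then obtain i where i: "j = i + 5" by (metis add.commute le_Suc_ex not_less)
    have r: "cnt (i+5) = 5 * cnt (i+3) - 4 * cnt (i+1)" using cnt_rec[of i] by linarith
    have "cnt (i+3) = int (gval (i+4))" using less[of "i+3"] i by (simp add: add.commute)
    moreover have "cnt (i+1) = int (gval (i+2))" using less[of "i+1"] i by (simp add: add.commute)
    moreover have "int (gval (i+6)) = 5 * int (gval (i+4)) - 4 * int (gval (i+2))"
    proof -
      have e1: "i+2+4 = i+6" and e2: "i+2+2 = i+4" by simp_all
      have A: "gval (i+6) + 4 * gval (i+2) = 5 * gval (i+4)"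
        using gval_rec[of "i+2"] by (simp only: e1 e2)
      then show ?thesis by linarith
    qed
    ultimately show ?thesis using r i by (simp add: add.commute)
  qed
qed


definition Paths :: "nat \<Rightarrow> st \<Rightarrow> (st \<Rightarrow> bool) \<Rightarrow> st list set" where
  "Paths j a P = {T. length T = Suc j \<and> set T \<subseteq> set allst \<and> successively Ok T \<and> hd T = a \<and> P (last T)}"

lemma distinct_allst: "distinct allst" by (simp add: allst_eq)

lemma nexts_set: "set (nexts a) = {x \<in> set allst. Ok a x}" by (simp add: nexts_def)
lemma nexts_distinct: "distinct (nexts a)" by (simp add: nexts_def distinct_allst)

lemma Paths_Suc: "a \<in> set allst \<Longrightarrow> Paths (Suc j) a P = (\<Union>x\<in>set (nexts a). (Cons a) ` Paths j x P)"
proof (intro equalityI subsetI)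
  fix T assume a: "a \<in> set allst" and T: "T \<in> Paths (Suc j) a P"
  then obtain T' where TT: "T = a # T'" and len: "length T' = Suc j"
    by (cases T) (auto simp: Paths_def)
  then obtain x T'' where T': "T' = x # T''" by (cases T') auto
  have x1: "x \<in> set (nexts a)" using T TT T' by (auto simp: Paths_def nexts_set)
  have x2: "T' \<in> Paths j x P" using T TT T' len by (auto simp: Paths_def)
  show "T \<in> (\<Union>x\<in>set (nexts a). (Cons a) ` Paths j x P)"
    using x1 x2 TT by blast
next
  fix T assume a: "a \<in> set allst" and T: "T \<in> (\<Union>x\<in>set (nexts a). (Cons a) ` Paths j x P)"
  then obtain x T' where x: "x \<in> set (nexts a)" and TT: "T = a # T'" and T': "T' \<in> Paths j x P" by auto
  then obtain T'' where T'': "T' = x # T''" by (cases T') (auto simp: Paths_def)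
  show "T \<in> Paths (Suc j) a P"
    using a x TT T' T'' by (auto simp: Paths_def nexts_set)
qed

lemma Paths_finite: "finite (Paths j a P)"
proof -
  have "Paths j a P \<subseteq> {T. set T \<subseteq> set allst \<and> length T = Suc j}" by (auto simp: Paths_def)
  moreover have "finite {T. set T \<subseteq> set allst \<and> length T = Suc j}"
    by (rule finite_lists_length_eq) simp
  ultimately show ?thesis by (rule finite_subset)
qed

lemma sum_list_map_length_filter_concat:
  "sum_list (map (\<lambda>x. length (filter P (f x))) xs) = length (filter P (concat (map f xs)))"
  by (induction xs) simp_all

lemma card_Paths: "a \<in> set allst \<Longrightarrow> card (Paths j a P) = length (filter P (walk j a))"
proof (induction j arbitrary: a)
  case 0
  have "Paths 0 a P = (if P a then {[a]} else {})"
    using 0 by (auto simp: Paths_def length_Suc_conv) (metis prod_cases3)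
  then show ?case by simp
next
  case (Suc j)
  have "card (Paths (Suc j) a P) = card (\<Union>x\<in>set (nexts a). (Cons a) ` Paths j x P)"
    using Suc.prems by (simp add: Paths_Suc)
  also have "\<dots> = (\<Sum>x\<in>set (nexts a). card ((Cons a) ` Paths j x P))"
    by (rule card_UN_disjoint) (auto simp: Paths_finite, auto simp: Paths_def)
  also have "\<dots> = (\<Sum>x\<in>set (nexts a). length (filter P (walk j x)))"
  proof (rule sum.cong)
    fix x assume "x \<in> set (nexts a)"
    then have "x \<in> set allst" by (simp add: nexts_set)
    then show "card ((Cons a) ` Paths j x P) = length (filter P (walk j x))"
      by (simp add: card_image Suc.IH)
  qed simp
  also have "\<dots> = sum_list (map (\<lambda>x. length (filter P (walk j x))) (nexts a))"
    by (simp add: sum_list_distinct_conv_sum_set nexts_distinct)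
  also have "\<dots> = length (filter P (walk (Suc j) a))"
    by (simp add: sum_list_map_length_filter_concat)
  finally show ?case .
qed


definition Lset :: "nat \<Rightarrow> st list set" where
  "Lset k = {T. length T = k \<and> set T \<subseteq> set allst \<and> successively Ok T \<and> fst (hd T) = 0 \<and> Q (hd T) (last T)}"

lemma sum_if_int: "sum_list (map (\<lambda>b. if P b then 1 else 0::int) xs) = int (length (filter P xs))"
  by (induction xs) simp_all

lemma int_sum_list_map: "int (sum_list (map f xs)) = sum_list (map (\<lambda>x. int (f x)) xs)"
  by (induction xs) simp_all

lemma card_Lset: "int (card (Lset (Suc j))) = cnt j"
proof -
  have eq: "Lset (Suc j) = (\<Union>a\<in>set a0list. Paths j a (Q a))"
    by (auto simp: Lset_def Paths_def a0list_def) (metis Zero_not_Suc hd_in_set list.size(3) subsetD)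
  have "card (Lset (Suc j)) = (\<Sum>a\<in>set a0list. card (Paths j a (Q a)))"
    unfolding eq by (rule card_UN_disjoint) (auto simp: Paths_finite, auto simp: Paths_def)
  also have "\<dots> = (\<Sum>a\<in>set a0list. length (filter (Q a) (walk j a)))"
    by (rule sum.cong) (auto simp: card_Paths a0list_def)
  also have "\<dots> = sum_list (map (\<lambda>a. length (filter (Q a) (walk j a))) a0list)"
    by (simp add: sum_list_distinct_conv_sum_set a0list_def distinct_allst)
  finally show ?thesis
    by (simp add: cnt_def sum_if_int int_sum_list_map)
qed

lemma card_Lset_gval: "card (Lset (Suc j)) = gval (Suc (Suc j) - 1)"
  using card_Lset[of j] cnt_gval[of j] by simp




definition sc :: "nat \<Rightarrow> (nat \<Rightarrow> nat) \<Rightarrow> nat \<Rightarrow> nat" where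
  "sc k c i = oth (c ((i + 3*k - 1) mod (3*k))) (c i)"

definition adj :: "nat \<Rightarrow> (nat \<Rightarrow> nat) \<Rightarrow> bool" where
  "adj k c = (\<forall>i<3*k. c i \<noteq> c (Suc i mod (3*k)))"

definition trip :: "nat \<Rightarrow> (nat \<Rightarrow> nat) \<Rightarrow> bool" where
  "trip k c = (\<forall>j<k. distinct [sc k c j, sc k c (j+k), sc k c (j+2*k)])"

definition Sset :: "nat \<Rightarrow> (nat \<Rightarrow> nat) set" where
  "Sset k = {c. c \<in> {..<3*k} \<rightarrow>\<^sub>E {..<3} \<and> c 0 = 0 \<and> c (3*k - 1) = 1 \<and> adj k c \<and> trip k c}"

definition toL :: "nat \<Rightarrow> (nat \<Rightarrow> nat) \<Rightarrow> st list" where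
  "toL k c = map (\<lambda>j. (c j, c (j+k), c (j+2*k))) [0..<k]"

fun comp :: "nat \<Rightarrow> st \<Rightarrow> nat" where
  "comp m (x,y,z) = (if m = 0 then x else if m = 1 then y else z)"

definition toC :: "nat \<Rightarrow> st list \<Rightarrow> nat \<Rightarrow> nat" where
  "toC k T = (\<lambda>i. if i < 3*k then comp (i div k) (T ! (i mod k)) else undefined)"

lemma toL_nth: "j < k \<Longrightarrow> toL k c ! j = (c j, c (j+k), c (j+2*k))"
  by (simp add: toL_def)

lemma all3: "(\<forall>i<3*(k::nat). P i) \<longleftrightarrow> (\<forall>j<k. P j \<and> P (j+k) \<and> P (j+2*k))"
proof
  assume "\<forall>i<3*k. P i" then show "\<forall>j<k. P j \<and> P (j+k) \<and> P (j+2*k)" by auto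
next
  assume h: "\<forall>j<k. P j \<and> P (j+k) \<and> P (j+2*k)"
  show "\<forall>i<3*k. P i"
  proof (intro allI impI)
    fix i assume i: "i < 3*k"
    show "P i"
    proof (cases "i < k")
      case True then show ?thesis using h by auto
    next
      case False
      show ?thesis
      proof (cases "i < 2*k")
        case True
        then show ?thesis using h[rule_format, of "i-k"] False by auto
      next
        case False
        then show ?thesis using h[rule_format, of "i-2*k"] i by auto
      qed
    qed
  qed
qed

lemma sc_Suc: "k \<ge> 1 \<Longrightarrow> Suc i < 3*k \<Longrightarrow> sc k c (Suc i) = oth (c i) (c (Suc i))"
  by (simp add: sc_def)

lemma sc_0: "k \<ge> 1 \<Longrightarrow> sc k c 0 = oth (c (3*k-1)) (c 0)"
  by (simp add: sc_def)

lemma key_equiv: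
  assumes k: "k \<ge> 1"
  shows "(adj k c \<and> trip k c) \<longleftrightarrow>
    (successively Ok (toL k c) \<and> Ok (rot (last (toL k c))) (hd (toL k c)))"
proof -
  have len: "length (toL k c) = k" by (simp add: toL_def)
  have hd: "hd (toL k c) = (c 0, c k, c (2*k))"
    using k by (simp add: hd_conv_nth toL_def)
  have last: "last (toL k c) = (c (k-1), c (2*k-1), c (3*k-1))"
  proof -
    have "last (toL k c) = toL k c ! (k-1)" using k len
      by (metis One_nat_def last_conv_nth le_zero_eq list.size(3) not_one_le_zero)
    also have "\<dots> = (c (k-1), c (k-1+k), c (k-1+2*k))" using k by (simp add: toL_nth)
    also have "k-1+k = 2*k-1" "k-1+2*k = 3*k-1" using k by simp_all
    ultimately show ?thesis by simp
  qed
  have succ: "successively Ok (toL k c) \<longleftrightarrow> (\<forall>j. Suc j < k \<longrightarrow>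
      c j \<noteq> c (Suc j) \<and> c (j+k) \<noteq> c (Suc j + k) \<and> c (j+2*k) \<noteq> c (Suc j+2*k) \<and>
      distinct [sc k c (Suc j), sc k c (Suc j + k), sc k c (Suc j + 2*k)])"
  proof -
    have "\<And>j. Suc j < k \<Longrightarrow> Ok (toL k c ! j) (toL k c ! Suc j) \<longleftrightarrow>
      (c j \<noteq> c (Suc j) \<and> c (j+k) \<noteq> c (Suc j + k) \<and> c (j+2*k) \<noteq> c (Suc j+2*k) \<and>
      distinct [sc k c (Suc j), sc k c (Suc j + k), sc k c (Suc j + 2*k)])"
    proof -
      fix j assume j: "Suc j < k"
      have s1: "sc k c (Suc j) = oth (c j) (c (Suc j))" using j k by (simp add: sc_Suc)
      have s2: "sc k c (Suc (j + k)) = oth (c (j+k)) (c (Suc (j + k)))" using j k sc_Suc[of k "j+k" c] by simp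
      have s3: "sc k c (Suc (j + 2*k)) = oth (c (j+2*k)) (c (Suc (j + 2*k)))" using j k sc_Suc[of k "j+2*k" c] by simp
      show "?thesis j" using j by (simp add: toL_nth s1 s2 s3)
    qed
    then show ?thesis by (simp add: successively_conv_nth len)
  qed
  have bnd: "Ok (rot (last (toL k c))) (hd (toL k c)) \<longleftrightarrow>
     (c (3*k-1) \<noteq> c 0 \<and> c (k-1) \<noteq> c k \<and> c (2*k-1) \<noteq> c (2*k) \<and>
      distinct [sc k c 0, sc k c k, sc k c (2*k)])"
  proof -
    have s1: "sc k c k = oth (c (k-1)) (c k)" using k sc_Suc[of k "k-1" c] by simp
    have s2: "sc k c (2*k) = oth (c (2*k-1)) (c (2*k))" using k sc_Suc[of k "2*k-1" c] by simp
    show ?thesis by (simp add: hd last s1 s2 sc_0[OF k])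
  qed
  have adj3: "adj k c \<longleftrightarrow> (\<forall>j<k. c j \<noteq> c (Suc j mod (3*k)) \<and> c (j+k) \<noteq> c (Suc (j+k) mod (3*k))
      \<and> c (j+2*k) \<noteq> c (Suc (j+2*k) mod (3*k)))"
    unfolding adj_def by (rule all3)
  show ?thesis
  proof
    assume A: "adj k c \<and> trip k c"
    have "successively Ok (toL k c)"
    proof -
      have "\<forall>j. Suc j < k \<longrightarrow>
      c j \<noteq> c (Suc j) \<and> c (j+k) \<noteq> c (Suc j + k) \<and> c (j+2*k) \<noteq> c (Suc j+2*k) \<and>
      distinct [sc k c (Suc j), sc k c (Suc j + k), sc k c (Suc j + 2*k)]"
      proof (intro allI impI)
        fix j assume j: "Suc j < k"
        have "c j \<noteq> c (Suc j mod (3*k)) \<and> c (j+k) \<noteq> c (Suc (j+k) mod (3*k))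
          \<and> c (j+2*k) \<noteq> c (Suc (j+2*k) mod (3*k))"
          using A[THEN conjunct1, unfolded adj3] j Suc_lessD by blast
        moreover have "Suc j mod (3*k) = Suc j" "Suc (j+k) mod (3*k) = Suc j + k"
           "Suc (j+2*k) mod (3*k) = Suc j + 2*k" using j by simp_all
        moreover have "distinct [sc k c (Suc j), sc k c (Suc j + k), sc k c (Suc j + 2*k)]"
          using A j unfolding trip_def by (auto simp: add.commute add.left_commute)
        ultimately show "c j \<noteq> c (Suc j) \<and> c (j+k) \<noteq> c (Suc j + k) \<and> c (j+2*k) \<noteq> c (Suc j+2*k) \<and>
      distinct [sc k c (Suc j), sc k c (Suc j + k), sc k c (Suc j + 2*k)]" by simp
      qed
      then show ?thesis using succ by simp
    qed
    moreover have "Ok (rot (last (toL k c))) (hd (toL k c))"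
    proof -
      have a1: "c (k-1) \<noteq> c (Suc (k-1) mod (3*k)) \<and> c (k-1+k) \<noteq> c (Suc (k-1+k) mod (3*k))
          \<and> c (k-1+2*k) \<noteq> c (Suc (k-1+2*k) mod (3*k))"
        using A[THEN conjunct1, unfolded adj3] k by (meson diff_less zero_less_one less_le_trans)
      have e: "Suc (k-1) mod (3*k) = k" "k-1+k = 2*k-1" "Suc (2*k-1) mod (3*k) = 2*k"
         "k-1+2*k = 3*k-1" "Suc (3*k-1) mod (3*k) = 0" using k by simp_all
      have a2: "c (k-1) \<noteq> c k \<and> c (2*k-1) \<noteq> c (2*k) \<and> c (3*k-1) \<noteq> c 0"
        using a1 by (simp only: e) simp
      have "distinct [sc k c 0, sc k c k, sc k c (2*k)]" using A k unfolding trip_def by auto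
      then show ?thesis using a2 unfolding bnd by auto
    qed
    ultimately show "successively Ok (toL k c) \<and> Ok (rot (last (toL k c))) (hd (toL k c))" by simp
  next
    assume B: "successively Ok (toL k c) \<and> Ok (rot (last (toL k c))) (hd (toL k c))"
    have S: "\<And>j. Suc j < k \<Longrightarrow> c j \<noteq> c (Suc j) \<and> c (j+k) \<noteq> c (Suc j + k) \<and> c (j+2*k) \<noteq> c (Suc j+2*k) \<and>
      distinct [sc k c (Suc j), sc k c (Suc j + k), sc k c (Suc j + 2*k)]"
      using B succ by blast
    have Bd: "c (3*k-1) \<noteq> c 0 \<and> c (k-1) \<noteq> c k \<and> c (2*k-1) \<noteq> c (2*k) \<and>
      distinct [sc k c 0, sc k c k, sc k c (2*k)]" using B bnd by simp
    have "adj k c"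
      unfolding adj3
    proof (intro allI impI)
      fix j assume j: "j < k"
      show "c j \<noteq> c (Suc j mod (3*k)) \<and> c (j+k) \<noteq> c (Suc (j+k) mod (3*k))
          \<and> c (j+2*k) \<noteq> c (Suc (j+2*k) mod (3*k))"
      proof (cases "Suc j < k")
        case True
        have "Suc j mod (3*k) = Suc j" "Suc (j+k) mod (3*k) = Suc j + k"
           "Suc (j+2*k) mod (3*k) = Suc j + 2*k" using True by simp_all
        then show ?thesis using S[OF True] by simp
      next
        case False
        then have jj: "j = k - 1" using j by simp
        have e: "Suc (k-1) mod (3*k) = k" "k-1+k = 2*k-1" "Suc (2*k-1) mod (3*k) = 2*k"
         "k-1+2*k = 3*k-1" "Suc (3*k-1) mod (3*k) = 0" using k by simp_all
        show ?thesis unfolding jj using Bd by (simp only: e) auto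
      qed
    qed
    moreover have "trip k c"
      unfolding trip_def
    proof (intro allI impI)
      fix j assume j: "j < k"
      show "distinct [sc k c j, sc k c (j+k), sc k c (j+2*k)]"
      proof (cases j)
        case 0 then show ?thesis using Bd by simp
      next
        case (Suc i)
        then show ?thesis using S[of i] j by (simp add: add.commute add.left_commute)
      qed
    qed
    ultimately show "adj k c \<and> trip k c" by simp
  qed
qed




lemma allst_mem: "(x,y,z) \<in> set allst \<longleftrightarrow> x < 3 \<and> y < 3 \<and> z < 3"
proof -
  have S: "set allst = {0,1,2} \<times> {0,1,2} \<times> {0,1,2}" by (auto simp: allst_def)
  have X: "\<And>x::nat. x \<in> {0,1,2} \<longleftrightarrow> x < 3" by auto
  show ?thesis by (simp only: S mem_Times_iff fst_conv snd_conv X)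
qed

lemma comp_lt3: "t \<in> set allst \<Longrightarrow> m < 3 \<Longrightarrow> comp m t < 3"
  by (cases t) (auto simp: allst_mem)

lemma comp_triple: "m < 3 \<Longrightarrow> comp m (c j, c (j+k), c (j+2*k)) = c (j + m*k)"
proof -
  assume "m < 3"
  then have "m = 0 \<or> m = 1 \<or> m = 2" by arith
  then show ?thesis by auto
qed

lemma toC_toL: assumes k: "k \<ge> 1" and c: "c \<in> {..<3*k} \<rightarrow>\<^sub>E {..<3::nat}"
  shows "toC k (toL k c) = c"
proof (rule ext)
  fix i
  show "toC k (toL k c) i = c i"
  proof (cases "i < 3*k")
    case True
    have m: "i mod k < k" using k by simp
    have d: "i div k < 3" using True by (rule less_mult_imp_div_less)
    have e1: "toC k (toL k c) i = comp (i div k) (toL k c ! (i mod k))"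
      using True by (simp add: toC_def)
    have e2: "toL k c ! (i mod k) = (c (i mod k), c (i mod k + k), c (i mod k + 2*k))"
      using m by (rule toL_nth)
    have e3: "comp (i div k) (c (i mod k), c (i mod k + k), c (i mod k + 2*k)) = c (i mod k + (i div k) * k)"
      by (rule comp_triple[OF d])
    have e4: "i mod k + (i div k) * k = i" by simp
    show ?thesis using e1 e2 e3 e4 by simp
  next
    case False
    then have "c i = undefined" by (intro PiE_arb[OF c]) simp
    then show ?thesis using False by (simp add: toC_def)
  qed
qed

lemma toL_toC: assumes k: "k \<ge> 1" and len: "length T = k"
  shows "toL k (toC k T) = T"
proof (rule nth_equalityI)
  show "length (toL k (toC k T)) = length T" using len by (simp add: toL_def)
next
  fix j assume "j < length (toL k (toC k T))"
  then have j: "j < k" by (simp add: toL_def)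
  obtain x y z where t: "T ! j = (x,y,z)" by (cases "T ! j") auto
  have a: "toC k T j = x" using j t by (simp add: toC_def)
  have b: "toC k T (j+k) = y"
  proof -
    have "(j + k) div k = 1" "(j + k) mod k = j" using j by (simp_all add: div_add_self2)
    then show ?thesis using j t by (simp add: toC_def)
  qed
  have c: "toC k T (j+2*k) = z"
  proof -
    have "(j + 2*k) div k = 2" using j by simp
    moreover have "(j + 2*k) mod k = j" using j by simp
    ultimately show ?thesis using j t by (simp add: toC_def)
  qed
  show "toL k (toC k T) ! j = T ! j" using j a b c t by (simp add: toL_nth)
qed

lemma toL_in: assumes k: "k \<ge> 1" and c: "c \<in> Sset k" shows "toL k c \<in> Lset k"
proof -
  have ce: "c \<in> {..<3*k} \<rightarrow>\<^sub>E {..<3::nat}" and c0: "c 0 = 0" and c1: "c (3*k-1) = 1"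
    and ad: "adj k c" and tr: "trip k c" using c unfolding Sset_def mem_Collect_eq by blast+
  have len: "length (toL k c) = k" by (simp add: toL_def)
  have set: "set (toL k c) \<subseteq> set allst"
  proof
    fix t assume "t \<in> set (toL k c)"
    then obtain j where j: "j < k" and t: "t = (c j, c (j+k), c (j+2*k))" by (auto simp: toL_def)
    have "c j < 3" "c (j+k) < 3" "c (j+2*k) < 3" using PiE_mem[OF ce, of j] PiE_mem[OF ce, of "j+k"] PiE_mem[OF ce, of "j+2*k"] j
      by simp_all
    then show "t \<in> set allst" by (simp add: t allst_mem)
  qed
  have hd: "hd (toL k c) = (c 0, c k, c (2*k))"
    using k by (simp add: hd_conv_nth toL_def)
  have last: "snd (snd (last (toL k c))) = c (3*k-1)"
  proof -
    have "last (toL k c) = toL k c ! (k-1)" using k len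
      by (metis One_nat_def last_conv_nth le_zero_eq list.size(3) not_one_le_zero)
    also have "\<dots> = (c (k-1), c (k-1+k), c (k-1+2*k))" using k by (simp add: toL_nth)
    also have "k-1+2*k = 3*k-1" using k by simp
    ultimately show ?thesis by simp
  qed
  have "successively Ok (toL k c) \<and> Ok (rot (last (toL k c))) (hd (toL k c))"
    using key_equiv[OF k] ad tr by blast
  then show ?thesis
    using len set c0 c1 hd last by (simp add: Lset_def Q_def)
qed

lemma toC_in: assumes k: "k \<ge> 1" and T: "T \<in> Lset k" shows "toC k T \<in> Sset k"
proof -
  have len: "length T = k" and set: "set T \<subseteq> set allst" and su: "successively Ok T"
    and h0: "fst (hd T) = 0" and q: "Q (hd T) (last T)" using T by (auto simp: Lset_def)
  let ?c = "toC k T"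
  have LC: "toL k ?c = T" by (rule toL_toC[OF k len])
  have ce: "?c \<in> {..<3*k} \<rightarrow>\<^sub>E {..<3::nat}"
  proof
    fix i assume i: "i \<in> {..<3*k}"
    have "i mod k < k" using k by simp
    then have "T ! (i mod k) \<in> set allst" using set len by auto
    moreover have "i div k < 3" using i by (simp add: div_less_iff_less_mult mult.commute)
    ultimately show "?c i \<in> {..<3}" using i by (simp add: toC_def comp_lt3)
  next
    fix i assume "i \<notin> {..<3*k}"
    then show "?c i = undefined" by (simp add: toC_def)
  qed
  have ne: "T \<noteq> []" using len k by auto
  have c0: "?c 0 = 0"
  proof -
    obtain x y z where t: "T ! 0 = (x,y,z)" by (cases "T ! 0") auto
    have "hd T = T ! 0" using ne by (simp add: hd_conv_nth)
    then show ?thesis using h0 t k by (simp add: toC_def)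
  qed
  have c1: "?c (3*k-1) = 1"
  proof -
    obtain x y z where t: "T ! (k-1) = (x,y,z)" by (cases "T ! (k-1)") auto
    have "last T = T ! (k-1)" using ne len by (simp add: last_conv_nth)
    then have z: "z = 1" using q t by (simp add: Q_def)
    have "(3*k-1) div k = 2" "(3*k-1) mod k = k-1"
    proof -
      show d: "(3*k-1) div k = 2" by (rule div_nat_eqI) (use k in simp_all)
      have "(3*k-1) mod k = (3*k-1) - (3*k-1) div k * k" by (simp add: minus_div_mult_eq_mod)
      then show "(3*k-1) mod k = k-1" unfolding d by simp
    qed
    then show ?thesis using t z k by (simp add: toC_def)
  qed
  have q2: "Ok (rot (last T)) (hd T)" using q unfolding Q_def by blast
  have at: "adj k ?c \<and> trip k ?c"
    using key_equiv[OF k, of ?c] su q2 unfolding LC by blast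
  show ?thesis unfolding Sset_def mem_Collect_eq
    using ce c0 c1 at by blast
qed

lemma card_Sset: assumes k: "k \<ge> 1" shows "card (Sset k) = card (Lset k)"
proof -
  have "bij_betw (toL k) (Sset k) (Lset k)"
  proof (rule bij_betw_byWitness[where f' = "toC k"])
    show "\<forall>c\<in>Sset k. toC k (toL k c) = c"
    proof
      fix c assume "c \<in> Sset k"
      then have "c \<in> {..<3*k} \<rightarrow>\<^sub>E {..<3::nat}" unfolding Sset_def mem_Collect_eq by blast
      then show "toC k (toL k c) = c" by (rule toC_toL[OF k])
    qed
    show "\<forall>T\<in>Lset k. toL k (toC k T) = T" using toL_toC[OF k] by (auto simp: Lset_def)
    show "toL k ` Sset k \<subseteq> Lset k" using toL_in[OF k] by auto
    show "toC k ` Lset k \<subseteq> Sset k" using toC_in[OF k] by auto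
  qed
  then show ?thesis by (rule bij_betw_same_card)
qed




definition outer :: "nat \<Rightarrow> nat \<Rightarrow> (bool \<times> nat) set" where
  "outer k i = {(False,i),(False,Suc i mod (3*k))}"
definition spoke :: "nat \<Rightarrow> (bool \<times> nat) set" where
  "spoke i = {(False,i),(True,i)}"
definition inner :: "nat \<Rightarrow> nat \<Rightarrow> (bool \<times> nat) set" where
  "inner k i = {(True,i),(True,(i+k) mod (3*k))}"

definition pr :: "nat \<Rightarrow> nat \<Rightarrow> nat" where "pr k i = (i + 3*k - 1) mod (3*k)"
definition mk :: "nat \<Rightarrow> nat \<Rightarrow> nat" where "mk k i = (i + 2*k) mod (3*k)"

lemma oth_lt: "a < 3 \<Longrightarrow> b < 3 \<Longrightarrow> a \<noteq> b \<Longrightarrow> oth a b < 3 \<and> oth a b \<noteq> a \<and> oth a b \<noteq> b"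
  unfolding oth_def by arith
lemma oth_uniq: "a < 3 \<Longrightarrow> b < 3 \<Longrightarrow> x < 3 \<Longrightarrow> a \<noteq> b \<Longrightarrow> x \<noteq> a \<Longrightarrow> x \<noteq> b \<Longrightarrow> x = oth a b"
  unfolding oth_def by arith
lemma oth_cover: "a < 3 \<Longrightarrow> b < 3 \<Longrightarrow> x < 3 \<Longrightarrow> a \<noteq> b \<Longrightarrow> x = a \<or> x = b \<or> x = oth a b"
  unfolding oth_def by arith
lemma oth_sym: "oth a b = oth b a" unfolding oth_def by arith

lemma mod_add_neq: "(x::nat) < n \<Longrightarrow> 0 < d \<Longrightarrow> d < n \<Longrightarrow> (x + d) mod n \<noteq> x"
proof
  assume a: "x < n" "0 < d" "d < n" and e: "(x + d) mod n = x"
  show False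
  proof (cases "x + d < n")
    case True then show False using a e by simp
  next
    case False
    then have "(x + d) mod n = x + d - n"
      using a by (simp add: mod_if le_mod_geq)
    then show False using a e by simp
  qed
qed

definition col :: "nat \<Rightarrow> (nat \<Rightarrow> nat) \<Rightarrow> (bool \<times> nat) set \<Rightarrow> nat" where
  "col k c e = (if \<exists>i<3*k. e = outer k i then c (THE i. i < 3*k \<and> e = outer k i)
     else if \<exists>i<3*k. e = spoke i then sc k c (THE i. i < 3*k \<and> e = spoke i)
     else sc k c (mk k (THE i. i < 3*k \<and> e = inner k i)))"

locale gpk =
  fixes k :: nat
  assumes k1: "1 \<le> k"
begin

abbreviation "n \<equiv> 3*k"
abbreviation "E \<equiv> GP_edges (3*k) k"

lemma n3: "3 \<le> n" using k1 by simp

lemma E_eq: "E = outer k ` {..<n} \<union> spoke ` {..<n} \<union> inner k ` {..<n}"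
  unfolding GP_edges_def outer_def spoke_def inner_def by auto

lemma pr_lt: "pr k i < n" using k1 by (simp add: pr_def)
lemma mk_lt: "mk k i < n" using k1 by (simp add: mk_def)
lemma Suc_pr: "i < n \<Longrightarrow> Suc (pr k i) mod n = i"
proof -
  assume i: "i < n"
  have "Suc (pr k i) mod n = Suc ((i + n - 1) mod n) mod n" by (simp add: pr_def)
  also have "\<dots> = Suc (i + n - 1) mod n" by (simp add: mod_Suc_eq)
  also have "Suc (i + n - 1) = i + n" using k1 by simp
  finally show ?thesis using i by simp
qed
lemma pr_Suc: "i < n \<Longrightarrow> pr k (Suc i mod n) = i"
proof -
  assume i: "i < n"
  have "pr k (Suc i mod n) = (Suc i mod n + n - 1) mod n" by (simp add: pr_def)
  also have "\<dots> = (Suc i mod n + (n - 1)) mod n" using k1 by simp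
  also have "\<dots> = (Suc i + (n - 1)) mod n" by (simp add: mod_add_left_eq)
  also have "Suc i + (n - 1) = i + n" using k1 by simp
  finally show ?thesis using i by simp
qed
lemma mk_k: "i < n \<Longrightarrow> (mk k i + k) mod n = i"
proof -
  assume i: "i < n"
  have "(mk k i + k) mod n = ((i + 2*k) mod n + k) mod n" by (simp add: mk_def)
  also have "\<dots> = (i + 2*k + k) mod n" by (simp add: mod_add_left_eq)
  also have "i + 2*k + k = i + n" by simp
  finally show ?thesis using i by simp
qed
lemma k_mk: "i < n \<Longrightarrow> mk k ((i + k) mod n) = i"
proof -
  assume i: "i < n"
  have "mk k ((i + k) mod n) = ((i + k) mod n + 2*k) mod n" by (simp add: mk_def)
  also have "\<dots> = (i + k + 2*k) mod n" by (simp add: mod_add_left_eq)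
  also have "i + k + 2*k = i + n" by simp
  finally show ?thesis using i by simp
qed

lemma pr_neq: "i < n \<Longrightarrow> pr k i \<noteq> i"
proof
  assume i: "i < n" and e: "pr k i = i"
  have "(i + (n - 1)) mod n \<noteq> i" by (rule mod_add_neq) (use i n3 in linarith)+
  moreover have "i + (n-1) = i + n - 1" using k1 by simp
  ultimately show False using e by (simp add: pr_def)
qed

lemma outer_inj: "i < n \<Longrightarrow> j < n \<Longrightarrow> outer k i = outer k j \<Longrightarrow> i = j"
proof (rule ccontr)
  assume i: "i < n" and j: "j < n" and e: "outer k i = outer k j" and ne: "i \<noteq> j"
  have "(False, i) \<in> outer k i" by (simp add: outer_def)
  then have "(False, i) \<in> outer k j" using e by simp
  then have ij: "i = Suc j mod n" using ne by (simp add: outer_def)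
  have "(False, j) \<in> outer k j" by (simp add: outer_def)
  then have "(False, j) \<in> outer k i" using e by simp
  then have ji: "j = Suc i mod n" using ne by (simp add: outer_def)
  have "j = Suc (Suc j mod n) mod n" using ij ji by simp
  also have "\<dots> = (j + 2) mod n" by (simp add: mod_Suc_eq)
  finally have "(j + 2) mod n = j" by simp
  moreover have "(j + 2) mod n \<noteq> j" by (rule mod_add_neq) (use j n3 in linarith)+
  ultimately show False by simp
qed

lemma inner_inj: "i < n \<Longrightarrow> j < n \<Longrightarrow> inner k i = inner k j \<Longrightarrow> i = j"
proof (rule ccontr)
  assume i: "i < n" and j: "j < n" and e: "inner k i = inner k j" and ne: "i \<noteq> j"
  have "(True, i) \<in> inner k i" by (simp add: inner_def)
  then have "(True, i) \<in> inner k j" using e by simp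
  then have ij: "i = (j + k) mod n" using ne by (simp add: inner_def)
  have "(True, j) \<in> inner k j" by (simp add: inner_def)
  then have "(True, j) \<in> inner k i" using e by simp
  then have ji: "j = (i + k) mod n" using ne by (simp add: inner_def)
  have "j = ((j + k) mod n + k) mod n" using ij ji by simp
  also have "\<dots> = (j + 2*k) mod n" by (simp add: mod_add_left_eq add.assoc mult_2)
  finally have "(j + 2*k) mod n = j" by simp
  moreover have "(j + 2*k) mod n \<noteq> j" by (rule mod_add_neq) (use j k1 in linarith)+
  ultimately show False by simp
qed

lemma spoke_inj: "spoke i = spoke j \<Longrightarrow> i = j"
proof -
  assume e: "spoke i = spoke j"
  have "(False, i) \<in> spoke i" by (simp add: spoke_def)
  then have "(False, i) \<in> spoke j" using e by simp
  then show "i = j" by (simp add: spoke_def)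
qed

lemma outer_spoke: "outer k i \<noteq> spoke j"
proof
  assume e: "outer k i = spoke j"
  have "(True, j) \<in> spoke j" by (simp add: spoke_def)
  then have "(True, j) \<in> outer k i" using e by simp
  then show False by (simp add: outer_def)
qed
lemma outer_inner: "outer k i \<noteq> inner k j"
proof
  assume e: "outer k i = inner k j"
  have "(True, j) \<in> inner k j" by (simp add: inner_def)
  then have "(True, j) \<in> outer k i" using e by simp
  then show False by (simp add: outer_def)
qed
lemma spoke_inner: "spoke i \<noteq> inner k j"
proof
  assume e: "spoke i = inner k j"
  have "(False, i) \<in> spoke i" by (simp add: spoke_def)
  then have "(False, i) \<in> inner k j" using e by simp
  then show False by (simp add: inner_def)
qed

lemma inc_u: assumes i: "i < n" and e: "e \<in> E"
  shows "(False,i) \<in> e \<longleftrightarrow> e = outer k i \<or> e = outer k (pr k i) \<or> e = spoke i"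
proof
  assume x: "(False,i) \<in> e"
  from e show "e = outer k i \<or> e = outer k (pr k i) \<or> e = spoke i"
    unfolding E_eq
  proof (elim UnE imageE)
    fix j assume j: "j \<in> {..<n}" and ej: "e = outer k j"
    then have "i = j \<or> i = Suc j mod n" using x by (simp add: outer_def)
    then show ?thesis
    proof
      assume "i = Suc j mod n"
      then have "j = pr k i" using pr_Suc j by simp
      then show ?thesis using ej by simp
    qed (use ej in simp)
  next
    fix j assume ej: "e = spoke j"
    then have "i = j" using x by (simp add: spoke_def)
    then show ?thesis using ej by simp
  next
    fix j assume "e = inner k j"
    then show ?thesis using x by (simp add: inner_def)
  qed
next
  assume "e = outer k i \<or> e = outer k (pr k i) \<or> e = spoke i"
  then show "(False, i) \<in> e"
    by (elim disjE) (simp_all add: outer_def spoke_def Suc_pr[OF i])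
qed

lemma inc_v: assumes i: "i < n" and e: "e \<in> E"
  shows "(True,i) \<in> e \<longleftrightarrow> e = spoke i \<or> e = inner k i \<or> e = inner k (mk k i)"
proof
  assume x: "(True,i) \<in> e"
  from e show "e = spoke i \<or> e = inner k i \<or> e = inner k (mk k i)"
    unfolding E_eq
  proof (elim UnE imageE)
    fix j assume "e = outer k j"
    then show ?thesis using x by (simp add: outer_def)
  next
    fix j assume ej: "e = spoke j"
    then have "i = j" using x by (simp add: spoke_def)
    then show ?thesis using ej by simp
  next
    fix j assume j: "j \<in> {..<n}" and ej: "e = inner k j"
    then have "i = j \<or> i = (j + k) mod n" using x by (simp add: inner_def)
    then show ?thesis
    proof
      assume "i = (j + k) mod n"
      then have "j = mk k i" using k_mk j by simp
      then show ?thesis using ej by simp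
    qed (use ej in simp)
  qed
next
  assume "e = spoke i \<or> e = inner k i \<or> e = inner k (mk k i)"
  then show "(True, i) \<in> e"
    by (elim disjE) (simp_all add: inner_def spoke_def mk_k[OF i])
qed

lemma mk_mk: "i < n \<Longrightarrow> mk k (mk k i) = (i + k) mod n"
proof -
  assume i: "i < n"
  have "mk k (mk k i) = ((i + 2*k) mod n + 2*k) mod n" by (simp add: mk_def)
  also have "\<dots> = (i + 2*k + 2*k) mod n" by (simp add: mod_add_left_eq)
  also have "\<dots> = ((i + k) + n) mod n" by (rule arg_cong[where f="\<lambda>x. x mod n"]) simp
  also have "\<dots> = (i + k) mod n" by (rule mod_add_self2)
  finally show ?thesis .
qed

lemma col_outer: "i < n \<Longrightarrow> col k c (outer k i) = c i"
proof -
  assume i: "i < n"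
  have t: "(THE j. j < n \<and> outer k i = outer k j) = i"
    by (rule the_equality) (use i outer_inj in auto)
  have ex: "\<exists>j<n. outer k i = outer k j" using i by blast
  show ?thesis unfolding col_def by (simp only: ex if_True t)
qed

lemma col_spoke: "i < n \<Longrightarrow> col k c (spoke i) = sc k c i"
proof -
  assume i: "i < n"
  have t: "(THE j. j < n \<and> spoke i = spoke j) = i"
    by (rule the_equality) (use i spoke_inj in auto)
  have no: "\<not> (\<exists>j<n. spoke i = outer k j)" using outer_spoke by metis
  have ex: "\<exists>j<n. spoke i = spoke j" using i by blast
  show ?thesis unfolding col_def by (simp only: no ex if_False if_True t)
qed

lemma col_inner: "i < n \<Longrightarrow> col k c (inner k i) = sc k c (mk k i)"
proof -
  assume i: "i < n"
  have t: "(THE j. j < n \<and> inner k i = inner k j) = i"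
    by (rule the_equality) (use i inner_inj in auto)
  have no: "\<not> (\<exists>j<n. inner k i = outer k j)" using outer_inner by metis
  have ns: "\<not> (\<exists>j<n. inner k i = spoke j)" using spoke_inner by metis
  show ?thesis unfolding col_def by (simp only: no ns if_False t)
qed

lemma sc_eq: "sc k c i = oth (c (pr k i)) (c i)" by (simp add: sc_def pr_def)

context
  fixes c assumes cS: "c \<in> Sset k"
begin

lemma cS_lt: "i < n \<Longrightarrow> c i < 3"
proof -
  assume i: "i < n"
  have ce: "c \<in> {..<n} \<rightarrow>\<^sub>E {..<3::nat}" using cS unfolding Sset_def mem_Collect_eq by blast
  show ?thesis using PiE_mem[OF ce, of i] i by simp
qed

lemma cS_adj: "i < n \<Longrightarrow> c (pr k i) \<noteq> c i"
proof -
  assume i: "i < n"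
  have "adj k c" using cS unfolding Sset_def mem_Collect_eq by blast
  then have "c (pr k i) \<noteq> c (Suc (pr k i) mod n)" using pr_lt unfolding adj_def by blast
  then show ?thesis using Suc_pr[OF i] by simp
qed

lemma sc_props: "i < n \<Longrightarrow> sc k c i < 3 \<and> sc k c i \<noteq> c (pr k i) \<and> sc k c i \<noteq> c i"
  unfolding sc_eq using oth_lt cS_lt cS_adj pr_lt by blast

lemma trip_gen: assumes i: "i < n"
  shows "distinct [sc k c i, sc k c ((i + k) mod n), sc k c (mk k i)]"
proof -
  have tr: "trip k c" using cS unfolding Sset_def mem_Collect_eq by blast
  show ?thesis
  proof (cases "i < k")
    case True
    have "(i + k) mod n = i + k" "mk k i = i + 2*k" using True by (simp_all add: mk_def)
    then show ?thesis using tr True unfolding trip_def by auto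
  next
    case False
    show ?thesis
    proof (cases "i < 2*k")
      case True
      define j where "j = i - k"
      have ij: "i = j + k" and j: "j < k" using True False by (simp_all add: j_def)
      have B: "(i + k) mod n = j + 2*k" using ij j by simp
      have C: "mk k i = j"
      proof -
        have "mk k i = (j + n) mod n" unfolding mk_def ij by (simp add: add.commute add.left_commute)
        then show ?thesis using j by simp
      qed
      have "distinct [sc k c j, sc k c (j+k), sc k c (j+2*k)]" using tr j unfolding trip_def by blast
      then show ?thesis unfolding B C unfolding ij by auto
    next
      case False
      define j where "j = i - 2*k"
      have ij: "i = j + 2*k" and j: "j < k" using False i by (simp_all add: j_def)
      have B: "(i + k) mod n = j"
      proof -
        have "(i + k) mod n = (j + n) mod n" unfolding ij by (simp add: add.commute add.left_commute)
        then show ?thesis using j by simp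
      qed
      have C: "mk k i = j + k"
      proof -
        have "mk k i = ((j + k) + n) mod n" unfolding mk_def ij
          by (rule arg_cong[where f="\<lambda>x. x mod n"]) simp
        also have "\<dots> = (j + k) mod n" by (rule mod_add_self2)
        also have "\<dots> = j + k" using j by simp
        finally show ?thesis .
      qed
      have "distinct [sc k c j, sc k c (j+k), sc k c (j+2*k)]" using tr j unfolding trip_def by blast
      then show ?thesis unfolding B C unfolding ij by auto
    qed
  qed
qed

end

end

definition Phi :: "nat \<Rightarrow> (nat \<Rightarrow> nat) \<Rightarrow> (bool \<times> nat) set set set" where
  "Phi k c = (\<lambda>a. {e \<in> GP_edges (3*k) k. col k c e = a}) ` {..<3}"

lemma pm3:
  assumes inc: "\<forall>e\<in>E. x \<in> e \<longleftrightarrow> e = ea \<or> e = eb \<or> e = ec"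
    and E: "ea \<in> E" "eb \<in> E" "ec \<in> E"
    and d: "distinct [f ea, f eb, f ec]"
    and lt: "f ea < 3" "f eb < 3" "f ec < (3::nat)" and a: "a < 3"
  shows "\<exists>!e. e \<in> {e\<in>E. f e = a} \<and> x \<in> e"
proof -
  have "f ec = oth (f ea) (f eb)" using oth_uniq lt d by simp
  then have "a = f ea \<or> a = f eb \<or> a = f ec" using oth_cover[of "f ea" "f eb" a] lt d a by simp
  then have ex: "\<exists>e. e \<in> {e\<in>E. f e = a} \<and> x \<in> e" using inc E by blast
  show ?thesis
  proof (rule ex_ex1I[OF ex])
    fix e e' assume h: "e \<in> {e\<in>E. f e = a} \<and> x \<in> e" "e' \<in> {e\<in>E. f e = a} \<and> x \<in> e'"
    then have "e = ea \<or> e = eb \<or> e = ec" "e' = ea \<or> e' = eb \<or> e' = ec" using inc by auto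
    then show "e = e'" using h d by auto
  qed
qed


context gpk
begin

lemma outer_E: "i < n \<Longrightarrow> outer k i \<in> E" unfolding E_eq by blast
lemma spoke_E: "i < n \<Longrightarrow> spoke i \<in> E" unfolding E_eq by blast
lemma inner_E: "i < n \<Longrightarrow> inner k i \<in> E" unfolding E_eq by blast

lemma modk_lt: "(i + k) mod n < n" using k1 by simp

lemma col_lt: assumes cS: "c \<in> Sset k" and e: "e \<in> E" shows "col k c e < 3"
  using e unfolding E_eq
proof (elim UnE imageE)
  fix i assume "i \<in> {..<n}" "e = outer k i"
  then show ?thesis using cS_lt[OF cS] col_outer by simp
next
  fix i assume "i \<in> {..<n}" "e = spoke i"
  then show ?thesis using sc_props[OF cS] col_spoke by simp
next
  fix i assume "i \<in> {..<n}" "e = inner k i"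
  then show ?thesis using sc_props[OF cS] col_inner mk_lt by simp
qed

lemma pm_Phi: assumes cS: "c \<in> Sset k" and a: "a < 3" and x: "x \<in> GP_verts n"
  shows "\<exists>!e. e \<in> {e\<in>E. col k c e = a} \<and> x \<in> e"
proof -
  obtain b i where xb: "x = (b,i)" and i: "i < n" using x by (cases x) (auto simp: GP_verts_def)
  show ?thesis
  proof (cases b)
    case False
    show ?thesis
    proof (rule pm3[where ea="outer k i" and eb="outer k (pr k i)" and ec="spoke i"])
      show "\<forall>e\<in>E. x \<in> e \<longleftrightarrow> e = outer k i \<or> e = outer k (pr k i) \<or> e = spoke i"
        using inc_u[OF i] xb False by simp
      show "outer k i \<in> E" "outer k (pr k i) \<in> E" "spoke i \<in> E" using i pr_lt outer_E spoke_E by auto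
      show "distinct [col k c (outer k i), col k c (outer k (pr k i)), col k c (spoke i)]"
        using i pr_lt col_outer col_spoke cS_adj[OF cS i] sc_props[OF cS i] by auto
      show "col k c (outer k i) < 3" "col k c (outer k (pr k i)) < 3" "col k c (spoke i) < 3"
        using i pr_lt col_outer col_spoke cS_lt[OF cS] sc_props[OF cS i] by auto
    qed (rule a)
  next
    case True
    have mm: "mk k (mk k i) = (i + k) mod n" by (rule mk_mk[OF i])
    have d: "distinct [sc k c i, sc k c ((i + k) mod n), sc k c (mk k i)]" by (rule trip_gen[OF cS i])
    show ?thesis
    proof (rule pm3[where ea="spoke i" and eb="inner k i" and ec="inner k (mk k i)"])
      show "\<forall>e\<in>E. x \<in> e \<longleftrightarrow> e = spoke i \<or> e = inner k i \<or> e = inner k (mk k i)"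
        using inc_v[OF i] xb True by simp
      show "spoke i \<in> E" "inner k i \<in> E" "inner k (mk k i) \<in> E" using i mk_lt inner_E spoke_E by auto
      show "distinct [col k c (spoke i), col k c (inner k i), col k c (inner k (mk k i))]"
        using i mk_lt col_inner col_spoke mm d by auto
      show "col k c (spoke i) < 3" "col k c (inner k i) < 3" "col k c (inner k (mk k i)) < 3"
        using i mk_lt col_inner col_spoke sc_props[OF cS] mm modk_lt by auto
    qed (rule a)
  qed
qed

lemma Phi_fact: assumes cS: "c \<in> Sset k" shows "one_factorisation (GP_verts n) E (Phi k c)"
  unfolding one_factorisation_def
proof
  let ?M = "\<lambda>a. {e\<in>E. col k c e = a}"
  have ne: "\<And>a. a < 3 \<Longrightarrow> ?M a \<noteq> {}"
  proof -
    fix a :: nat assume a: "a < 3"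
    have "(False, 0) \<in> GP_verts n" using k1 by (simp add: GP_verts_def)
    then show "?M a \<noteq> {}" using pm_Phi[OF cS a] by blast
  qed
  show "partition_on E (Phi k c)"
  proof (rule partition_onI)
    show "\<Union> (Phi k c) = E"
      unfolding Phi_def using col_lt[OF cS] by auto
    show "\<And>p q. p \<in> Phi k c \<Longrightarrow> q \<in> Phi k c \<Longrightarrow> p \<noteq> q \<Longrightarrow> disjnt p q"
      unfolding Phi_def disjnt_def by auto
    show "{} \<notin> Phi k c" unfolding Phi_def using ne by auto
  qed
  show "\<forall>M\<in>Phi k c. perfect_matching (GP_verts n) E M"
    unfolding Phi_def perfect_matching_def using pm_Phi[OF cS] by auto
qed

end


definition Mof :: "'a set set set \<Rightarrow> 'a set \<Rightarrow> 'a set set" where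
  "Mof F e = (THE M. M \<in> F \<and> e \<in> M)"

lemma disj_eq: "disjoint F \<Longrightarrow> A \<in> F \<Longrightarrow> B \<in> F \<Longrightarrow> e \<in> A \<Longrightarrow> e \<in> B \<Longrightarrow> A = B"
proof (rule ccontr)
  assume d: "disjoint F" and AB: "A \<in> F" "B \<in> F" "e \<in> A" "e \<in> B" and ne: "A \<noteq> B"
  have "A \<inter> B = {}" using d AB(1,2) ne unfolding disjoint_def by blast
  then show False using AB(3,4) by blast
qed

lemma fac_parts: assumes f: "one_factorisation V E F"
  shows "\<Union>F = E" "disjoint F" "\<And>M. M \<in> F \<Longrightarrow> perfect_matching V E M"
  using f unfolding one_factorisation_def partition_on_def by blast+

lemma Mof_in: assumes f: "one_factorisation V E F" and e: "e \<in> E"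
  shows "Mof F e \<in> F \<and> e \<in> Mof F e"
proof -
  obtain M where M: "M \<in> F" "e \<in> M" using e fac_parts(1)[OF f] by blast
  have u: "\<And>M'. M' \<in> F \<and> e \<in> M' \<Longrightarrow> M' = M"
    using disj_eq[OF fac_parts(2)[OF f]] M by blast
  have "Mof F e = M" unfolding Mof_def by (rule the_equality) (use M u in blast)+
  then show ?thesis using M by simp
qed

lemma Mof_eq: assumes f: "one_factorisation V E F" and M: "M \<in> F" and e: "e \<in> M"
  shows "Mof F e = M"
proof -
  have eE: "e \<in> E" using fac_parts(1)[OF f] M e by blast
  have "Mof F e \<in> F" "e \<in> Mof F e" using Mof_in[OF f eE] by blast+
  then show ?thesis using disj_eq[OF fac_parts(2)[OF f]] M e by blast
qed

lemma F_sub: assumes f: "one_factorisation V E F" and M: "M \<in> F" shows "M \<subseteq> E"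
  using fac_parts(1)[OF f] M by blast

lemma Mof_neq: assumes f: "one_factorisation V E F" and x: "x \<in> V" and e: "e \<in> E" "e' \<in> E"
  and xe: "x \<in> e" "x \<in> e'" and ne: "e \<noteq> e'"
  shows "Mof F e \<noteq> Mof F e'"
proof
  assume eq: "Mof F e = Mof F e'"
  let ?M = "Mof F e"
  have M: "?M \<in> F" "e \<in> ?M" "e' \<in> ?M" using Mof_in[OF f e(1)] Mof_in[OF f e(2)] eq by auto
  have "perfect_matching V E ?M" by (rule fac_parts(3)[OF f M(1)])
  then have "\<exists>!e. e \<in> ?M \<and> x \<in> e" using x unfolding perfect_matching_def by blast
  then have "e = e'" using M xe by blast
  then show False using ne by simp
qed

lemma Mof_cover: assumes f: "one_factorisation V E F" and x: "x \<in> V"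
  and inc: "\<forall>e\<in>E. x \<in> e \<longleftrightarrow> e = ea \<or> e = eb \<or> e = ec" and M: "M \<in> F"
  shows "M = Mof F ea \<or> M = Mof F eb \<or> M = Mof F ec"
proof -
  have pm: "perfect_matching V E M" by (rule fac_parts(3)[OF f M])
  then have "\<exists>!e. e \<in> M \<and> x \<in> e" using x unfolding perfect_matching_def by blast
  then obtain e where e: "e \<in> M" "x \<in> e" by blast
  have "e \<in> E" using F_sub[OF f M] e by blast
  then have "e = ea \<or> e = eb \<or> e = ec" using inc e by blast
  moreover have "Mof F e = M" by (rule Mof_eq[OF f M e(1)])
  ultimately show ?thesis by blast
qed

lemma M_as_Mof: assumes f: "one_factorisation V E F" and M: "M \<in> F" shows "M = {e\<in>E. Mof F e = M}"
proof
  show "M \<subseteq> {e\<in>E. Mof F e = M}" using F_sub[OF f M] Mof_eq[OF f M] by blast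
  show "{e\<in>E. Mof F e = M} \<subseteq> M" using Mof_in[OF f] by blast
qed

definition idxF :: "nat \<Rightarrow> (bool \<times> nat) set set set \<Rightarrow> (bool \<times> nat) set \<Rightarrow> nat" where
  "idxF k F e = (if Mof F e = Mof F (outer k 0) then 0 else if Mof F e = Mof F (outer k (3*k-1)) then 1 else 2)"

definition Psi :: "nat \<Rightarrow> (bool \<times> nat) set set set \<Rightarrow> nat \<Rightarrow> nat" where
  "Psi k F = (\<lambda>i. if i < 3*k then idxF k F (outer k i) else undefined)"

context gpk
begin

lemma pr0: "pr k 0 = n - 1" using k1 by (simp add: pr_def)

lemma V0: "(False, 0) \<in> GP_verts n" using k1 by (simp add: GP_verts_def)
lemma Vin: "i < n \<Longrightarrow> (b, i) \<in> GP_verts n" by (simp add: GP_verts_def)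

context
  fixes F assumes fF: "one_factorisation (GP_verts n) E F"
begin

abbreviation "A0 \<equiv> Mof F (outer k 0)"
abbreviation "A1 \<equiv> Mof F (outer k (n-1))"
abbreviation "A2 \<equiv> Mof F (spoke 0)"

lemma inc0: "\<forall>e\<in>E. (False,0) \<in> e \<longleftrightarrow> e = outer k 0 \<or> e = outer k (n-1) \<or> e = spoke 0"
  using inc_u[of 0] k1 pr0 by simp

lemma A_in: "A0 \<in> F" "A1 \<in> F" "A2 \<in> F"
  using Mof_in[OF fF] outer_E spoke_E k1 by auto

lemma A_dist: "A0 \<noteq> A1" "A0 \<noteq> A2" "A1 \<noteq> A2"
proof -
  have ne: "outer k 0 \<noteq> outer k (n-1)" using outer_inj[of 0 "n-1"] k1 by auto
  have E: "outer k 0 \<in> E" "outer k (n-1) \<in> E" "spoke 0 \<in> E" using outer_E spoke_E k1 by auto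
  have x: "(False,0) \<in> outer k 0" "(False,0) \<in> outer k (n-1)" "(False,0) \<in> spoke 0"
    using inc0 E by auto
  show "A0 \<noteq> A1" by (rule Mof_neq[OF fF V0 E(1,2) x(1,2) ne])
  show "A0 \<noteq> A2" by (rule Mof_neq[OF fF V0 E(1,3) x(1,3)]) (use outer_spoke in metis)
  show "A1 \<noteq> A2" by (rule Mof_neq[OF fF V0 E(2,3) x(2,3)]) (use outer_spoke in metis)
qed

lemma F_eq: "F = {A0, A1, A2}"
  using Mof_cover[OF fF V0 inc0] A_in by auto

lemma Mof_cases: "e \<in> E \<Longrightarrow> Mof F e = A0 \<or> Mof F e = A1 \<or> Mof F e = A2"
  using Mof_in[OF fF] F_eq by blast

abbreviation "idx \<equiv> idxF k F"

lemma idx_lt: "idx e < 3" by (simp add: idxF_def)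

lemma idx_iff: assumes e: "e \<in> E" "e' \<in> E" shows "idx e = idx e' \<longleftrightarrow> Mof F e = Mof F e'"
proof -
  have d: "A0 \<noteq> A1" "A0 \<noteq> A2" "A1 \<noteq> A2" "A1 \<noteq> A0" "A2 \<noteq> A0" "A2 \<noteq> A1"
    using A_dist by blast+
  from Mof_cases[OF e(1)] Mof_cases[OF e(2)] show ?thesis
    unfolding idxF_def by (elim disjE) (simp_all add: d)
qed

lemma idx_neq: "x \<in> GP_verts n \<Longrightarrow> e \<in> E \<Longrightarrow> e' \<in> E \<Longrightarrow> x \<in> e \<Longrightarrow> x \<in> e' \<Longrightarrow> e \<noteq> e' \<Longrightarrow> idx e \<noteq> idx e'"
  using idx_iff Mof_neq[OF fF] by blast

lemma idx_spoke: assumes i: "i < n" shows "idx (spoke i) = oth (idx (outer k (pr k i))) (idx (outer k i))"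
proof -
  have E: "outer k (pr k i) \<in> E" "outer k i \<in> E" "spoke i \<in> E" using i pr_lt outer_E spoke_E by auto
  have x: "(False,i) \<in> outer k (pr k i)" "(False,i) \<in> outer k i" "(False,i) \<in> spoke i"
    using inc_u[OF i] E by auto
  have ne1: "outer k (pr k i) \<noteq> outer k i" using outer_inj[OF pr_lt i] pr_neq[OF i] by auto
  show ?thesis
  proof (rule oth_uniq)
    show "idx (outer k (pr k i)) \<noteq> idx (outer k i)" by (rule idx_neq[OF Vin[OF i] E(1,2) x(1,2) ne1])
    show "idx (spoke i) \<noteq> idx (outer k (pr k i))" by (rule idx_neq[OF Vin[OF i] E(3,1) x(3,1)]) (use outer_spoke in metis)
    show "idx (spoke i) \<noteq> idx (outer k i)" by (rule idx_neq[OF Vin[OF i] E(3,2) x(3,2)]) (use outer_spoke in metis)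
  qed (simp_all add: idx_lt)
qed

lemma tri: assumes i: "i < n"
  shows "distinct [idx (inner k i), idx (inner k ((i+k) mod n)), idx (inner k (mk k i))]"
proof -
  let ?j = "(i + k) mod n" and ?m = "mk k i"
  have jm: "(?j + k) mod n = ?m" by (simp add: mk_def mod_add_left_eq add.assoc mult_2)
  have mi: "(?m + k) mod n = i" by (rule mk_k[OF i])
  have ij: "i \<noteq> ?j" using mod_add_neq[OF i, of k] k1 by auto
  have im: "i \<noteq> ?m" using mod_add_neq[OF i, of "2*k"] k1 by (auto simp: mk_def)
  have jm': "?j \<noteq> ?m"
  proof
    assume "?j = ?m"
    then have "(?j + k) mod n = ?j" using jm by simp
    moreover have "(?j + k) mod n \<noteq> ?j" using mod_add_neq[OF modk_lt, of k] k1 by auto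
    ultimately show False by simp
  qed
  have E: "inner k i \<in> E" "inner k ?j \<in> E" "inner k ?m \<in> E" using i modk_lt mk_lt inner_E by auto
  have n1: "inner k i \<noteq> inner k ?j" using inner_inj[OF i modk_lt] ij by blast
  have n2: "inner k i \<noteq> inner k ?m" using inner_inj[OF i mk_lt] im by blast
  have n3': "inner k ?j \<noteq> inner k ?m" using inner_inj[OF modk_lt mk_lt] jm' by blast
  have a: "idx (inner k i) \<noteq> idx (inner k ?j)"
    by (rule idx_neq[OF Vin[OF modk_lt[of i], of True] E(1,2) _ _ n1]) (simp_all add: inner_def)
  have b: "idx (inner k ?j) \<noteq> idx (inner k ?m)"
    by (rule idx_neq[OF Vin[OF mk_lt[of i], of True] E(2,3) _ _ n3']) (simp_all add: inner_def jm)
  have c: "idx (inner k i) \<noteq> idx (inner k ?m)"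
    by (rule idx_neq[OF Vin[OF i, of True] E(1,3) _ _ n2]) (simp_all add: inner_def mi)
  show ?thesis using a b c by simp
qed

lemma idx_inner: assumes i: "i < n" shows "idx (inner k i) = idx (spoke (mk k i))"
proof -
  let ?j = "(i + k) mod n" and ?m = "mk k i"
  have m: "?m < n" by (rule mk_lt)
  have mm: "mk k ?m = ?j" by (rule mk_mk[OF i])
  have E: "spoke ?m \<in> E" "inner k ?m \<in> E" "inner k ?j \<in> E" using m modk_lt spoke_E inner_E by auto
  have x: "(True,?m) \<in> spoke ?m" "(True,?m) \<in> inner k ?m" "(True,?m) \<in> inner k ?j"
    using inc_v[OF m] E mm by auto
  have sp: "idx (spoke ?m) = oth (idx (inner k ?m)) (idx (inner k ?j))"
  proof (rule oth_uniq)
    have d: "distinct [idx (inner k i), idx (inner k ?j), idx (inner k ?m)]" by (rule tri[OF i])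
    show "idx (inner k ?m) \<noteq> idx (inner k ?j)" using d by auto
    show "idx (spoke ?m) \<noteq> idx (inner k ?m)" by (rule idx_neq[OF Vin[OF m] E(1,2) x(1,2)]) (use spoke_inner in metis)
    show "idx (spoke ?m) \<noteq> idx (inner k ?j)" by (rule idx_neq[OF Vin[OF m] E(1,3) x(1,3)]) (use spoke_inner in metis)
  qed (simp_all add: idx_lt)
  have "idx (inner k i) = oth (idx (inner k ?m)) (idx (inner k ?j))"
  proof (rule oth_uniq)
    have d: "distinct [idx (inner k i), idx (inner k ?j), idx (inner k ?m)]" by (rule tri[OF i])
    show "idx (inner k ?m) \<noteq> idx (inner k ?j)" using d by auto
    show "idx (inner k i) \<noteq> idx (inner k ?m)" using d by auto
    show "idx (inner k i) \<noteq> idx (inner k ?j)" using d by auto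
  qed (simp_all add: idx_lt)
  then show ?thesis using sp by simp
qed

lemma col_Psi: assumes e: "e \<in> E" shows "col k (Psi k F) e = idx e"
  using e unfolding E_eq
proof (elim UnE imageE)
  fix i assume i: "i \<in> {..<n}" and ei: "e = outer k i"
  then show ?thesis using col_outer by (simp add: Psi_def)
next
  fix i assume i: "i \<in> {..<n}" and ei: "e = spoke i"
  then show ?thesis using col_spoke idx_spoke pr_lt by (simp add: Psi_def sc_eq)
next
  fix i assume i: "i \<in> {..<n}" and ei: "e = inner k i"
  then show ?thesis using col_inner col_spoke idx_spoke idx_inner pr_lt mk_lt by (simp add: Psi_def sc_eq)
qed

lemma sc_Psi: assumes m: "m < n" shows "sc k (Psi k F) m = idx (inner k ((m + k) mod n))"
proof -
  have "sc k (Psi k F) m = col k (Psi k F) (spoke m)" using col_spoke[OF m] by simp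
  also have "\<dots> = idx (spoke m)" by (rule col_Psi[OF spoke_E[OF m]])
  also have "\<dots> = idx (inner k ((m + k) mod n))"
    using idx_inner[OF modk_lt[of m]] k_mk[OF m] by simp
  finally show ?thesis .
qed

lemma Psi_in: "Psi k F \<in> Sset k"
proof -
  have ce: "Psi k F \<in> {..<n} \<rightarrow>\<^sub>E {..<3::nat}"
  proof (rule PiE_I)
    fix x assume "x \<in> {..<n}"
    then show "Psi k F x \<in> {..<3}" by (simp add: Psi_def idx_lt)
  next
    fix x assume "x \<notin> {..<n}"
    then show "Psi k F x = undefined" by (simp add: Psi_def)
  qed
  have c0: "Psi k F 0 = 0" using k1 by (simp add: Psi_def idxF_def)
  have c1: "Psi k F (n - 1) = 1"
  proof -
    have "A1 \<noteq> A0" using A_dist by blast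
    then show ?thesis using k1 by (simp add: Psi_def idxF_def)
  qed
  have ad: "adj k (Psi k F)"
    unfolding adj_def
  proof (intro allI impI)
    fix i assume i: "i < n"
    let ?j = "Suc i mod n"
    have j: "?j < n" using k1 by simp
    have ne: "i \<noteq> ?j" using mod_add_neq[OF i, of 1] n3 by simp
    have ne': "outer k i \<noteq> outer k ?j" using outer_inj[OF i j] ne by blast
    have "idx (outer k i) \<noteq> idx (outer k ?j)"
      by (rule idx_neq[OF Vin[OF j, of False] outer_E[OF i] outer_E[OF j] _ _ ne'])
         (simp_all add: outer_def)
    then show "Psi k F i \<noteq> Psi k F ?j" using i j by (simp add: Psi_def)
  qed
  have tr: "trip k (Psi k F)"
    unfolding trip_def
  proof (intro allI impI)
    fix j assume j: "j < k"
    have j1: "j < n" "j + k < n" "j + 2*k < n" using j by simp_all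
    have e1: "(j + k) mod n = j + k" and e2: "(j + k + k) mod n = j + 2*k"
      and e3: "(j + 2*k + k) mod n = j" and e4: "mk k j = j + 2*k"
      using j by (simp_all add: mk_def)
    have d: "distinct [idx (inner k j), idx (inner k ((j+k) mod n)), idx (inner k (mk k j))]"
      by (rule tri[OF j1(1)])
    show "distinct [sc k (Psi k F) j, sc k (Psi k F) (j + k), sc k (Psi k F) (j + 2 * k)]"
      unfolding sc_Psi[OF j1(1)] sc_Psi[OF j1(2)] sc_Psi[OF j1(3)] e1 e2 e3
      using d unfolding e1 e4 by auto
  qed
  show ?thesis unfolding Sset_def mem_Collect_eq using ce c0 c1 ad tr by blast
qed

lemma Phi_Psi: "Phi k (Psi k F) = F"
proof -
  have "Phi k (Psi k F) = (\<lambda>a. {e \<in> E. idx e = a}) ` {..<3}"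
    unfolding Phi_def using col_Psi by (intro image_cong) auto
  also have "{..<3::nat} = {0,1,2}" by auto
  also have "(\<lambda>a. {e \<in> E. idx e = a}) ` {0,1,2} = {A0, A1, A2}"
  proof -
    have d: "A0 \<noteq> A1" "A0 \<noteq> A2" "A1 \<noteq> A2" "A1 \<noteq> A0" "A2 \<noteq> A0" "A2 \<noteq> A1"
      using A_dist by blast+
    have s0: "{e \<in> E. idx e = 0} = A0"
    proof -
      have "{e \<in> E. idx e = 0} = {e \<in> E. Mof F e = A0}" by (auto simp: idxF_def)
      then show ?thesis using M_as_Mof[OF fF A_in(1)] by simp
    qed
    have s1: "{e \<in> E. idx e = 1} = A1"
    proof -
      have "{e \<in> E. idx e = 1} = {e \<in> E. Mof F e = A1}" using d by (auto simp: idxF_def)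
      then show ?thesis using M_as_Mof[OF fF A_in(2)] by simp
    qed
    have s2: "{e \<in> E. idx e = 2} = A2"
    proof -
      have "{e \<in> E. idx e = 2} = {e \<in> E. Mof F e = A2}"
      proof (intro equalityI subsetI)
        fix e assume "e \<in> {e \<in> E. idx e = 2}"
        then show "e \<in> {e \<in> E. Mof F e = A2}"
          using Mof_cases[of e] by (auto simp: idxF_def split: if_splits)
      next
        fix e assume "e \<in> {e \<in> E. Mof F e = A2}"
        then show "e \<in> {e \<in> E. idx e = 2}" using d by (auto simp: idxF_def)
      qed
      then show ?thesis using M_as_Mof[OF fF A_in(3)] by simp
    qed
    show ?thesis using s0 s1 s2 by simp
  qed
  also have "\<dots> = F" using F_eq by simp
  finally show ?thesis .
qed

end

lemma Psi_Phi: assumes cS: "c \<in> Sset k" shows "Psi k (Phi k c) = c"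
proof -
  let ?F = "Phi k c"
  let ?M = "\<lambda>a. {e \<in> E. col k c e = a}"
  have fF: "one_factorisation (GP_verts n) E ?F" by (rule Phi_fact[OF cS])
  have MF: "\<And>e. e \<in> E \<Longrightarrow> Mof ?F e = ?M (col k c e)"
  proof -
    fix e assume e: "e \<in> E"
    have "?M (col k c e) \<in> ?F" unfolding Phi_def using col_lt[OF cS e] by blast
    moreover have "e \<in> ?M (col k c e)" using e by simp
    ultimately show "Mof ?F e = ?M (col k c e)" by (rule Mof_eq[OF fF])
  qed
  have Minj: "\<And>a b. a < 3 \<Longrightarrow> ?M a = ?M b \<Longrightarrow> a = b"
  proof -
    fix a b :: nat assume a: "a < 3" and eq: "?M a = ?M b"
    have "\<exists>!e. e \<in> ?M a \<and> (False, 0) \<in> e" by (rule pm_Phi[OF cS a V0])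
    then obtain e where e: "e \<in> ?M a" by blast
    then have "e \<in> ?M b" by (simp only: eq)
    then have "col k c e = b" by simp
    moreover have "col k c e = a" using e by simp
    ultimately show "a = b" by simp
  qed
  have c0: "c 0 = 0" and c1: "c (n - 1) = 1" using cS unfolding Sset_def mem_Collect_eq by blast+
  have A0: "Mof ?F (outer k 0) = ?M 0" using MF[OF outer_E[of 0]] col_outer[of 0 c] c0 k1 by simp
  have A1: "Mof ?F (outer k (n-1)) = ?M 1" using MF[OF outer_E[of "n-1"]] col_outer[of "n-1" c] c1 k1 by simp
  have idx: "\<And>e. e \<in> E \<Longrightarrow> idxF k ?F e = col k c e"
  proof -
    fix e assume e: "e \<in> E"
    have lt: "col k c e < 3" by (rule col_lt[OF cS e])
    have h0: "?M (col k c e) = ?M 0 \<longleftrightarrow> col k c e = 0"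
    proof
      assume "?M (col k c e) = ?M 0" then show "col k c e = 0" by (rule Minj[OF lt])
    next
      assume "col k c e = 0" then show "?M (col k c e) = ?M 0" by (simp only:)
    qed
    have h1: "?M (col k c e) = ?M 1 \<longleftrightarrow> col k c e = 1"
    proof
      assume "?M (col k c e) = ?M 1" then show "col k c e = 1" by (rule Minj[OF lt])
    next
      assume "col k c e = 1" then show "?M (col k c e) = ?M 1" by (simp only:)
    qed
    have "idxF k ?F e = (if Mof ?F e = Mof ?F (outer k 0) then 0
        else if Mof ?F e = Mof ?F (outer k (n-1)) then 1 else 2)" by (simp only: idxF_def)
    also have "\<dots> = (if ?M (col k c e) = ?M 0 then 0 else if ?M (col k c e) = ?M 1 then 1 else 2)"
      by (simp only: MF[OF e] A0 A1)
    also have "\<dots> = (if col k c e = 0 then 0 else if col k c e = 1 then 1 else 2)"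
      by (simp only: h0 h1)
    also have "\<dots> = col k c e" using lt by arith
    finally show "idxF k ?F e = col k c e" .
  qed
  show ?thesis
  proof (rule ext)
    fix i
    show "Psi k ?F i = c i"
    proof (cases "i < n")
      case True
      then show ?thesis using idx[OF outer_E[OF True]] col_outer[OF True] by (simp add: Psi_def)
    next
      case False
      have ce: "c \<in> {..<n} \<rightarrow>\<^sub>E {..<3::nat}" using cS unfolding Sset_def mem_Collect_eq by blast
      have "c i = undefined" by (rule PiE_arb[OF ce]) (use False in simp)
      then show ?thesis using False by (simp add: Psi_def)
    qed
  qed
qed

lemma card_fact: "card {F. one_factorisation (GP_verts n) E F} = card (Sset k)"
proof -
  have "bij_betw (Phi k) (Sset k) {F. one_factorisation (GP_verts n) E F}"
  proof (rule bij_betw_byWitness[where f' = "Psi k"])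
    show "\<forall>c\<in>Sset k. Psi k (Phi k c) = c" using Psi_Phi by blast
    show "\<forall>F\<in>{F. one_factorisation (GP_verts n) E F}. Phi k (Psi k F) = F" using Phi_Psi by blast
    show "Phi k ` Sset k \<subseteq> {F. one_factorisation (GP_verts n) E F}" using Phi_fact by blast
    show "Psi k ` {F. one_factorisation (GP_verts n) E F} \<subseteq> Sset k" using Psi_in by blast
  qed
  then show ?thesis by (rule bij_betw_same_card[symmetric])
qed

end



theorem theorem1:
  fixes k :: nat
  assumes "k \<ge> 1"
  shows "card {F. one_factorisation (GP_verts (3 * k)) (GP_edges (3 * k) k) F} =
           (if odd k then jacobsthal k else 4 * jacobsthal k)"
proof -
  interpret gpk k using assms by unfold_locales
  obtain j where kj: "k = Suc j" using assms by (cases k) auto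
  have "card {F. one_factorisation (GP_verts (3 * k)) (GP_edges (3 * k) k) F} = card (Lset k)"
    using card_fact card_Sset[OF assms] by simp
  also have "\<dots> = gval k" using card_Lset_gval[of j] kj by simp
  finally show ?thesis by (simp add: gval_def)
qed

end
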